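(* Let $C=\{C_n,\partial_n\}_{n\geq 0}$ be a chain complex of abelian groups (with $\partial_0=0$ and $C_{-1}=0$), and let $D=\{D_n\}_{n\ge 0}$ and $D'=\{D'_n\}_{n\ge 0}$ be graded subgroups of $C$ with $D'_n\subseteq D_n\subseteq C_n$ for all $n$. Then the inclusion $\mathrm{Inf}(D,C)\hookrightarrow \mathrm{Sup}(D,C)$ induces a chain map $$\iota:\ \mathrm{Inf}(D,C)/\mathrm{Inf}(D',C)\longrightarrow \mathrm{Sup}(D,C)/\mathrm{Sup}(D',C),$$ and $\iota$ induces an isomorphism $\iota_*: H_*\big(\mathrm{Inf}(D,C)/\mathrm{Inf}(D',C)\big)\xrightarrow{\cong} H_*\big(\mathrm{Sup}(D,C)/\mathrm{Sup}(D',C)\big)$ in every degree.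
   Context: For a chain complex $C$ and a graded subgroup $D$ of $C$ (with $D_{-1}=0$), the infimum chain complex $\mathrm{Inf}(D,C)$ is given by $\mathrm{Inf}_n(D,C)=D_n\cap \partial_n^{-1}(D_{n-1})$ (the largest sub-chain complex of $C$ contained in $D$), and the supremum chain complex $\mathrm{Sup}(D,C)$ is given by $\mathrm{Sup}_n(D,C)=D_n+\partial_{n+1}(D_{n+1})$ (the smallest sub-chain complex of $C$ containing $D$). If $D'\subseteq D$, then $\mathrm{Inf}(D',C)\subseteq\mathrm{Inf}(D,C)\subseteq \mathrm{Sup}(D,C)$ and $\mathrm{Inf}(D',C)\subseteq\mathrm{Sup}(D',C)\subseteq\mathrm{Sup}(D,C)$ are sub-chain complexes. *)

theory Defs
  imports "HOL-Algebra.Algebra"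
begin

text \<open>A chain complex of abelian groups, indexed by degrees n \<ge> 0.
  d n is the boundary map from degree Suc n to degree n (the paper's \<partial>_{n+1});
  the paper's \<partial>_0 = 0 into C_{-1} = 0 is implicit.\<close>
definition chain_complex ::
  "(nat \<Rightarrow> ('a, 'm) monoid_scheme) \<Rightarrow> (nat \<Rightarrow> 'a \<Rightarrow> 'a) \<Rightarrow> bool" where
  "chain_complex G d \<longleftrightarrow>
     (\<forall>n. comm_group (G n)) \<and>
     (\<forall>n. d n \<in> hom (G (Suc n)) (G n)) \<and>
     (\<forall>n x. x \<in> carrier (G (Suc (Suc n))) \<longrightarrow> d n (d (Suc n) x) = \<one>\<^bsub>G n\<^esub>)"

definition chain_map ::
  "(nat \<Rightarrow> ('a, 'm) monoid_scheme) \<Rightarrow> (nat \<Rightarrow> 'a \<Rightarrow> 'a) \<Rightarrow>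
   (nat \<Rightarrow> ('b, 'n) monoid_scheme) \<Rightarrow> (nat \<Rightarrow> 'b \<Rightarrow> 'b) \<Rightarrow> (nat \<Rightarrow> 'a \<Rightarrow> 'b) \<Rightarrow> bool" where
  "chain_map G d G' d' f \<longleftrightarrow>
     (\<forall>n. f n \<in> hom (G n) (G' n)) \<and>
     (\<forall>n x. x \<in> carrier (G (Suc n)) \<longrightarrow> f n (d n x) = d' n (f (Suc n) x))"

definition cycles ::
  "(nat \<Rightarrow> ('a, 'm) monoid_scheme) \<Rightarrow> (nat \<Rightarrow> 'a \<Rightarrow> 'a) \<Rightarrow> nat \<Rightarrow> 'a set" where
  "cycles G d n = (if n = 0 then carrier (G 0) else kernel (G n) (G (n - 1)) (d (n - 1)))"

definition boundaries ::
  "(nat \<Rightarrow> ('a, 'm) monoid_scheme) \<Rightarrow> (nat \<Rightarrow> 'a \<Rightarrow> 'a) \<Rightarrow> nat \<Rightarrow> 'a set" where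
  "boundaries G d n = d n ` carrier (G (Suc n))"

definition homology ::
  "(nat \<Rightarrow> ('a, 'm) monoid_scheme) \<Rightarrow> (nat \<Rightarrow> 'a \<Rightarrow> 'a) \<Rightarrow> nat \<Rightarrow> 'a set monoid" where
  "homology G d n = subgroup_generated (G n) (cycles G d n) Mod boundaries G d n"

definition hom_induced ::
  "(nat \<Rightarrow> ('b, 'n) monoid_scheme) \<Rightarrow> (nat \<Rightarrow> 'b \<Rightarrow> 'b) \<Rightarrow> (nat \<Rightarrow> 'a \<Rightarrow> 'b) \<Rightarrow> nat \<Rightarrow> 'a set \<Rightarrow> 'b set" where
  "hom_induced H e f n S = set_mult (H n) (boundaries H e n) (f n ` S)"

definition Inf_cx ::
  "(nat \<Rightarrow> ('a, 'm) monoid_scheme) \<Rightarrow> (nat \<Rightarrow> 'a \<Rightarrow> 'a) \<Rightarrow> (nat \<Rightarrow> 'a set) \<Rightarrow> nat \<Rightarrow> 'a set" where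
  "Inf_cx C d D n = (if n = 0 then D 0 else D n \<inter> (d (n - 1)) -` D (n - 1))"

definition Sup_cx ::
  "(nat \<Rightarrow> ('a, 'm) monoid_scheme) \<Rightarrow> (nat \<Rightarrow> 'a \<Rightarrow> 'a) \<Rightarrow> (nat \<Rightarrow> 'a set) \<Rightarrow> nat \<Rightarrow> 'a set" where
  "Sup_cx C d D n = D n <#>\<^bsub>C n\<^esub> (d n ` D (Suc n))"

definition quot_cx ::
  "(nat \<Rightarrow> ('a, 'm) monoid_scheme) \<Rightarrow> (nat \<Rightarrow> 'a set) \<Rightarrow> (nat \<Rightarrow> 'a set) \<Rightarrow> nat \<Rightarrow> 'a set monoid" where
  "quot_cx C A B n = subgroup_generated (C n) (A n) Mod B n"

definition quot_bd ::
  "(nat \<Rightarrow> ('a, 'm) monoid_scheme) \<Rightarrow> (nat \<Rightarrow> 'a \<Rightarrow> 'a) \<Rightarrow> (nat \<Rightarrow> 'a set) \<Rightarrow> nat \<Rightarrow> 'a set \<Rightarrow> 'a set" where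
  "quot_bd C d B n S = B n <#>\<^bsub>C n\<^esub> (d n ` S)"

end

theory Submission imports Defs begin

lemma sgm: "set_mult (subgroup_generated G Z) P Q = set_mult G P Q"
  by (simp add: set_mult_def subgroup_generated_def)

lemma quot_basic:
  assumes G: "comm_group G" and Z: "subgroup Z G" and B: "subgroup B G" and BZ: "B \<subseteq> Z"
  shows "comm_group (subgroup_generated G Z Mod B)"
    and "carrier (subgroup_generated G Z Mod B) = (\<lambda>z. B #>\<^bsub>G\<^esub> z) ` Z"
    and "\<one>\<^bsub>subgroup_generated G Z Mod B\<^esub> = B"
    and "\<And>x y. x \<in> Z \<Longrightarrow> y \<in> Z \<Longrightarrow> (B #>\<^bsub>G\<^esub> x) \<otimes>\<^bsub>subgroup_generated G Z Mod B\<^esub> (B #>\<^bsub>G\<^esub> y) = B #>\<^bsub>G\<^esub> (x \<otimes>\<^bsub>G\<^esub> y)"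
    and "\<And>P Q. monoid.mult (subgroup_generated G Z Mod B) P Q = set_mult G P Q"
proof -
  interpret comm_group G by fact
  have SG: "comm_group (subgroup_generated G Z)" by (simp add: abelian_subgroup_generated comm_group_axioms)
  have cZ: "carrier (subgroup_generated G Z) = Z" using Z by (simp add: subgroup.carrier_subgroup_generated_subgroup)
  have BS: "subgroup B (subgroup_generated G Z)" using B BZ cZ by (simp add: subgroup_subgroup_generated_iff)
  show "comm_group (subgroup_generated G Z Mod B)"
    using comm_group.abelian_FactGroup[OF SG BS] .
  have rc: "\<And>z. B #>\<^bsub>subgroup_generated G Z\<^esub> z = B #>\<^bsub>G\<^esub> z"
    by (simp add: r_coset_def subgroup_generated_def)
  show "carrier (subgroup_generated G Z Mod B) = (\<lambda>z. B #>\<^bsub>G\<^esub> z) ` Z"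
    by (auto simp add: FactGroup_def RCOSETS_def cZ rc)
  show "\<one>\<^bsub>subgroup_generated G Z Mod B\<^esub> = B" by (simp add: FactGroup_def)
  show sm: "\<And>P Q. monoid.mult (subgroup_generated G Z Mod B) P Q = set_mult G P Q"
    by (simp add: FactGroup_def set_mult_def subgroup_generated_def)
  have N: "B \<lhd> G" using B subgroup_imp_normal by blast
  show "\<And>x y. x \<in> Z \<Longrightarrow> y \<in> Z \<Longrightarrow> (B #>\<^bsub>G\<^esub> x) \<otimes>\<^bsub>subgroup_generated G Z Mod B\<^esub> (B #>\<^bsub>G\<^esub> y) = B #>\<^bsub>G\<^esub> (x \<otimes>\<^bsub>G\<^esub> y)"
  proof -
    fix x y assume "x \<in> Z" "y \<in> Z"
    then have "x \<in> carrier G" "y \<in> carrier G" by (simp_all add: subgroup.mem_carrier[OF Z])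
    then show "(B #>\<^bsub>G\<^esub> x) \<otimes>\<^bsub>subgroup_generated G Z Mod B\<^esub> (B #>\<^bsub>G\<^esub> y) = B #>\<^bsub>G\<^esub> (x \<otimes>\<^bsub>G\<^esub> y)"
      by (simp add: FactGroup_def sgm normal.rcos_sum[OF N])
  qed
qed

lemma coset_eq_iff:
  assumes "group G" "subgroup B G" "x \<in> carrier G" "y \<in> carrier G"
  shows "(B #>\<^bsub>G\<^esub> x = B #>\<^bsub>G\<^esub> y) \<longleftrightarrow> x \<otimes>\<^bsub>G\<^esub> inv\<^bsub>G\<^esub> y \<in> B"
proof
  assume "B #>\<^bsub>G\<^esub> x = B #>\<^bsub>G\<^esub> y"
  moreover have "x \<in> B #>\<^bsub>G\<^esub> x" using assms group.rcos_self by metis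
  ultimately show "x \<otimes>\<^bsub>G\<^esub> inv\<^bsub>G\<^esub> y \<in> B" using assms subgroup.rcos_module_imp by metis
next
  assume "x \<otimes>\<^bsub>G\<^esub> inv\<^bsub>G\<^esub> y \<in> B"
  then have "x \<in> B #>\<^bsub>G\<^esub> y" using assms subgroup.rcos_module_rev by metis
  then show "B #>\<^bsub>G\<^esub> x = B #>\<^bsub>G\<^esub> y" using assms group.repr_independence by metis
qed

lemma img_coset:
  assumes G: "group G" and G': "group G'" and B: "subgroup B G" and B': "subgroup B' G'"
    and f: "f \<in> hom G G'" and fB: "f ` B \<subseteq> B'" and z: "z \<in> carrier G"
  shows "B' <#>\<^bsub>G'\<^esub> f ` (B #>\<^bsub>G\<^esub> z) = B' #>\<^bsub>G'\<^esub> f z"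
proof -
  interpret group_hom G G' f using G G' f by (simp add: group_hom_def group_hom_axioms_def)
  show ?thesis
  proof (intro equalityI subsetI)
    fix x assume "x \<in> B' <#>\<^bsub>G'\<^esub> f ` (B #>\<^bsub>G\<^esub> z)"
    then obtain b' y where b': "b' \<in> B'" and y: "y \<in> B #>\<^bsub>G\<^esub> z" and x: "x = b' \<otimes>\<^bsub>G'\<^esub> f y"
      unfolding set_mult_def by blast
    then obtain b where b: "b \<in> B" and "y = b \<otimes>\<^bsub>G\<^esub> z" unfolding r_coset_def by blast
    with x have x: "x = b' \<otimes>\<^bsub>G'\<^esub> f (b \<otimes>\<^bsub>G\<^esub> z)" by simp
    have bc: "b \<in> carrier G" by (rule subgroup.mem_carrier[OF B b])
    have b'c: "b' \<in> carrier G'" by (rule subgroup.mem_carrier[OF B' b'])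
    have "f (b \<otimes>\<^bsub>G\<^esub> z) = f b \<otimes>\<^bsub>G'\<^esub> f z" by (rule hom_mult[OF bc z])
    also have "b' \<otimes>\<^bsub>G'\<^esub> (f b \<otimes>\<^bsub>G'\<^esub> f z) = (b' \<otimes>\<^bsub>G'\<^esub> f b) \<otimes>\<^bsub>G'\<^esub> f z"
      by (rule H.m_assoc[symmetric, OF b'c hom_closed[OF bc] hom_closed[OF z]])
    ultimately have "x = (b' \<otimes>\<^bsub>G'\<^esub> f b) \<otimes>\<^bsub>G'\<^esub> f z" using x by simp
    moreover have "b' \<otimes>\<^bsub>G'\<^esub> f b \<in> B'" using fB b b' subgroup.m_closed[OF B'] by blast
    ultimately show "x \<in> B' #>\<^bsub>G'\<^esub> f z" by (auto simp: r_coset_def)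
  next
    fix x assume "x \<in> B' #>\<^bsub>G'\<^esub> f z"
    then obtain b' where b': "b' \<in> B'" and x: "x = b' \<otimes>\<^bsub>G'\<^esub> f z" by (auto simp: r_coset_def)
    have "f z = f (\<one>\<^bsub>G\<^esub> \<otimes>\<^bsub>G\<^esub> z)" using z by simp
    moreover have "\<one>\<^bsub>G\<^esub> \<otimes>\<^bsub>G\<^esub> z \<in> B #>\<^bsub>G\<^esub> z" using B by (auto simp: r_coset_def intro!: bexI[of _ "\<one>\<^bsub>G\<^esub>"] subgroup.one_closed)
    ultimately show "x \<in> B' <#>\<^bsub>G'\<^esub> f ` (B #>\<^bsub>G\<^esub> z)" using b' x by (auto simp: set_mult_def)
  qed
qed

lemma quot_hom_iso:
  assumes G: "comm_group G" and G': "comm_group G'"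
    and Z: "subgroup Z G" and B: "subgroup B G" and BZ: "B \<subseteq> Z"
    and Z': "subgroup Z' G'" and B': "subgroup B' G'" and BZ': "B' \<subseteq> Z'"
    and f: "f \<in> hom G G'" and fZ: "f ` Z \<subseteq> Z'" and fB: "f ` B \<subseteq> B'"
  shows "(\<lambda>S. B' <#>\<^bsub>G'\<^esub> f ` S) \<in> hom (subgroup_generated G Z Mod B) (subgroup_generated G' Z' Mod B')"
    and "\<lbrakk>\<And>z. z \<in> Z \<Longrightarrow> f z \<in> B' \<Longrightarrow> z \<in> B;
          \<And>z'. z' \<in> Z' \<Longrightarrow> \<exists>z\<in>Z. \<exists>b'\<in>B'. z' = b' \<otimes>\<^bsub>G'\<^esub> f z\<rbrakk>
         \<Longrightarrow> (\<lambda>S. B' <#>\<^bsub>G'\<^esub> f ` S) \<in> iso (subgroup_generated G Z Mod B) (subgroup_generated G' Z' Mod B')"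
proof -
  interpret G: comm_group G by fact
  interpret G': comm_group G' by fact
  interpret group_hom G G' f using f by (simp add: group_hom_def group_hom_axioms_def G.is_group G'.is_group)
  note QB = quot_basic[OF G Z B BZ]
  note QB' = quot_basic[OF G' Z' B' BZ']
  have zc: "z \<in> carrier G" if "z \<in> Z" for z using subgroup.mem_carrier[OF Z that] .
  have img: "B' <#>\<^bsub>G'\<^esub> f ` (B #>\<^bsub>G\<^esub> z) = B' #>\<^bsub>G'\<^esub> f z" if "z \<in> Z" for z
    using img_coset[OF G.is_group G'.is_group B B' f fB zc[OF that]] .
  have fz: "f z \<in> Z'" if "z \<in> Z" for z using fZ that by blast
  show H: "(\<lambda>S. B' <#>\<^bsub>G'\<^esub> f ` S) \<in> hom (subgroup_generated G Z Mod B) (subgroup_generated G' Z' Mod B')"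
  proof (rule homI)
    fix S assume "S \<in> carrier (subgroup_generated G Z Mod B)"
    then have "S \<in> (\<lambda>z. B #>\<^bsub>G\<^esub> z) ` Z" unfolding QB(2) .
    then obtain z where S: "S = B #>\<^bsub>G\<^esub> z" and z: "z \<in> Z" by (rule imageE)
    have "B' #>\<^bsub>G'\<^esub> f z \<in> carrier (subgroup_generated G' Z' Mod B')"
      unfolding QB'(2) by (rule imageI[OF fz[OF z]])
    then show "B' <#>\<^bsub>G'\<^esub> f ` S \<in> carrier (subgroup_generated G' Z' Mod B')"
      unfolding S img[OF z] .
  next
    fix S T assume "S \<in> carrier (subgroup_generated G Z Mod B)" "T \<in> carrier (subgroup_generated G Z Mod B)"
    then obtain x y where x: "x \<in> Z" and S: "S = B #>\<^bsub>G\<^esub> x" and y: "y \<in> Z" and T: "T = B #>\<^bsub>G\<^esub> y"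
      unfolding QB(2) by (auto elim!: imageE)
    have xy: "x \<otimes>\<^bsub>G\<^esub> y \<in> Z" using subgroup.m_closed[OF Z x y] .
    show "B' <#>\<^bsub>G'\<^esub> f ` (S \<otimes>\<^bsub>subgroup_generated G Z Mod B\<^esub> T) =
          (B' <#>\<^bsub>G'\<^esub> f ` S) \<otimes>\<^bsub>subgroup_generated G' Z' Mod B'\<^esub> (B' <#>\<^bsub>G'\<^esub> f ` T)"
      unfolding S T QB(4)[OF x y] img[OF x] img[OF y] img[OF xy] QB'(4)[OF fz[OF x] fz[OF y]]
      using hom_mult[OF zc[OF x] zc[OF y]] by simp
  qed
  assume inj: "\<And>z. z \<in> Z \<Longrightarrow> f z \<in> B' \<Longrightarrow> z \<in> B"
    and surj: "\<And>z'. z' \<in> Z' \<Longrightarrow> \<exists>z\<in>Z. \<exists>b'\<in>B'. z' = b' \<otimes>\<^bsub>G'\<^esub> f z"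
  show "(\<lambda>S. B' <#>\<^bsub>G'\<^esub> f ` S) \<in> iso (subgroup_generated G Z Mod B) (subgroup_generated G' Z' Mod B')"
    unfolding iso_def bij_betw_def
  proof (intro CollectI conjI H)
    show "inj_on (\<lambda>S. B' <#>\<^bsub>G'\<^esub> f ` S) (carrier (subgroup_generated G Z Mod B))"
    proof (rule inj_onI)
      fix S T assume "S \<in> carrier (subgroup_generated G Z Mod B)" "T \<in> carrier (subgroup_generated G Z Mod B)"
      then obtain x y where x: "x \<in> Z" and S: "S = B #>\<^bsub>G\<^esub> x" and y: "y \<in> Z" and T: "T = B #>\<^bsub>G\<^esub> y"
        unfolding QB(2) by (auto elim!: imageE)
      assume "B' <#>\<^bsub>G'\<^esub> f ` S = B' <#>\<^bsub>G'\<^esub> f ` T"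
      then have "B' #>\<^bsub>G'\<^esub> f x = B' #>\<^bsub>G'\<^esub> f y" using S T img[OF x] img[OF y] by simp
      then have "f x \<otimes>\<^bsub>G'\<^esub> inv\<^bsub>G'\<^esub> f y \<in> B'"
        using coset_eq_iff[OF G'.is_group B' hom_closed[OF zc[OF x]] hom_closed[OF zc[OF y]]] by simp
      moreover have "f (x \<otimes>\<^bsub>G\<^esub> inv\<^bsub>G\<^esub> y) = f x \<otimes>\<^bsub>G'\<^esub> inv\<^bsub>G'\<^esub> f y"
        using zc[OF x] zc[OF y] by (simp add: hom_inv)
      moreover have xiy: "x \<otimes>\<^bsub>G\<^esub> inv\<^bsub>G\<^esub> y \<in> Z"
        using subgroup.m_closed[OF Z x subgroup.m_inv_closed[OF Z y]] .
      ultimately have "x \<otimes>\<^bsub>G\<^esub> inv\<^bsub>G\<^esub> y \<in> B" using inj by metis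
      then show "S = T" using S T coset_eq_iff[OF G.is_group B zc[OF x] zc[OF y]] by simp
    qed
    show "(\<lambda>S. B' <#>\<^bsub>G'\<^esub> f ` S) ` carrier (subgroup_generated G Z Mod B) = carrier (subgroup_generated G' Z' Mod B')"
    proof
      show "(\<lambda>S. B' <#>\<^bsub>G'\<^esub> f ` S) ` carrier (subgroup_generated G Z Mod B) \<subseteq> carrier (subgroup_generated G' Z' Mod B')"
        using H by (auto simp: hom_def)
      show "carrier (subgroup_generated G' Z' Mod B') \<subseteq> (\<lambda>S. B' <#>\<^bsub>G'\<^esub> f ` S) ` carrier (subgroup_generated G Z Mod B)"
      proof
        fix V assume "V \<in> carrier (subgroup_generated G' Z' Mod B')"
        then have "V \<in> (\<lambda>z. B' #>\<^bsub>G'\<^esub> z) ` Z'" unfolding QB'(2) .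
        then obtain z' where V: "V = B' #>\<^bsub>G'\<^esub> z'" and z': "z' \<in> Z'" by (rule imageE)
        obtain z b' where z: "z \<in> Z" and b': "b' \<in> B'" and e: "z' = b' \<otimes>\<^bsub>G'\<^esub> f z" using surj[OF z'] by blast
        have "z' \<in> B' #>\<^bsub>G'\<^esub> f z" using e b' unfolding r_coset_def by blast
        then have "B' #>\<^bsub>G'\<^esub> f z = B' #>\<^bsub>G'\<^esub> z'"
          using G'.repr_independence[OF _ hom_closed[OF zc[OF z]] B'] by blast
        then have "V = B' <#>\<^bsub>G'\<^esub> f ` (B #>\<^bsub>G\<^esub> z)" using V img[OF z] by simp
        moreover have "B #>\<^bsub>G\<^esub> z \<in> carrier (subgroup_generated G Z Mod B)" unfolding QB(2) by (rule imageI[OF z])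
        ultimately show "V \<in> (\<lambda>S. B' <#>\<^bsub>G'\<^esub> f ` S) ` carrier (subgroup_generated G Z Mod B)" by (rule image_eqI)
      qed
    qed
  qed
qed

locale ccx =
  fixes C :: "nat \<Rightarrow> ('a, 'm) monoid_scheme" and d :: "nat \<Rightarrow> 'a \<Rightarrow> 'a"
  assumes cc: "chain_complex C d"
begin

lemma CG: "comm_group (C n)" using cc by (simp add: chain_complex_def)
lemma Cg: "group (C n)" using CG comm_group.axioms(2) by blast
lemma dhom: "d n \<in> hom (C (Suc n)) (C n)" using cc by (simp add: chain_complex_def)
lemma dd: "x \<in> carrier (C (Suc (Suc n))) \<Longrightarrow> d n (d (Suc n) x) = \<one>\<^bsub>C n\<^esub>"
  using cc by (simp add: chain_complex_def)
lemma gh: "group_hom (C (Suc n)) (C n) (d n)"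
  by (simp add: group_hom_def group_hom_axioms_def Cg dhom)

lemma d_closed: "x \<in> carrier (C (Suc n)) \<Longrightarrow> d n x \<in> carrier (C n)"
  using dhom by (auto simp: hom_def)
lemma d_mult: "x \<in> carrier (C (Suc n)) \<Longrightarrow> y \<in> carrier (C (Suc n)) \<Longrightarrow>
   d n (x \<otimes>\<^bsub>C (Suc n)\<^esub> y) = d n x \<otimes>\<^bsub>C n\<^esub> d n y"
  using group_hom.hom_mult[OF gh] .
lemma d_inv: "x \<in> carrier (C (Suc n)) \<Longrightarrow> d n (inv\<^bsub>C (Suc n)\<^esub> x) = inv\<^bsub>C n\<^esub> d n x"
  using group_hom.hom_inv[OF gh] .
lemma d_one: "d n \<one>\<^bsub>C (Suc n)\<^esub> = \<one>\<^bsub>C n\<^esub>"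
  using group_hom.hom_one[OF gh] .

lemma Inf_0: "Inf_cx C d D 0 = D 0" by (simp add: Inf_cx_def)
lemma Inf_Suc: "Inf_cx C d D (Suc n) = {x \<in> D (Suc n). d n x \<in> D n}" by (auto simp add: Inf_cx_def)

lemma Sup_mem: "x \<in> Sup_cx C d D n \<longleftrightarrow> (\<exists>a\<in>D n. \<exists>b\<in>D (Suc n). x = a \<otimes>\<^bsub>C n\<^esub> d n b)"
  by (auto simp add: Sup_cx_def set_mult_def)

lemma Inf_subgroup:
  assumes D: "\<And>n. subgroup (D n) (C n)"
  shows "subgroup (Inf_cx C d D n) (C n)"
proof (cases n)
  case 0 then show ?thesis using D by (simp add: Inf_0)
next
  case (Suc m)
  interpret group_hom "C (Suc m)" "C m" "d m" by (rule gh)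
  have "subgroup {x \<in> D (Suc m). d m x \<in> D m} (C (Suc m))"
  proof (rule G.subgroupI)
    show "{x \<in> D (Suc m). d m x \<in> D m} \<subseteq> carrier (C (Suc m))" using subgroup.subset[OF D] by blast
    show "{x \<in> D (Suc m). d m x \<in> D m} \<noteq> {}"
      using subgroup.one_closed[OF D, of "Suc m"] subgroup.one_closed[OF D, of m] by auto
  next
    fix a assume "a \<in> {x \<in> D (Suc m). d m x \<in> D m}"
    then show "inv\<^bsub>C (Suc m)\<^esub> a \<in> {x \<in> D (Suc m). d m x \<in> D m}"
      using subgroup.m_inv_closed[OF D] subgroup.mem_carrier[OF D] by auto
  next
    fix a b assume "a \<in> {x \<in> D (Suc m). d m x \<in> D m}" "b \<in> {x \<in> D (Suc m). d m x \<in> D m}"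
    then show "a \<otimes>\<^bsub>C (Suc m)\<^esub> b \<in> {x \<in> D (Suc m). d m x \<in> D m}"
      using subgroup.m_closed[OF D] subgroup.mem_carrier[OF D] by auto
  qed
  then show ?thesis using Suc by (simp add: Inf_Suc)
qed

lemma Sup_subgroup:
  assumes D: "\<And>n. subgroup (D n) (C n)"
  shows "subgroup (Sup_cx C d D n) (C n)"
proof -
  interpret group_hom "C (Suc n)" "C n" "d n" by (rule gh)
  have "subgroup (d n ` D (Suc n)) (C n)" by (rule subgroup_img_is_subgroup[OF D])
  then show ?thesis unfolding Sup_cx_def using comm_group.mult_subgroups[OF CG D] by blast
qed

lemma D_Sup: assumes D: "\<And>n. subgroup (D n) (C n)" shows "D n \<subseteq> Sup_cx C d D n"
proof
  fix x assume x: "x \<in> D n"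
  have xc: "x \<in> carrier (C n)" using x subgroup.mem_carrier[OF D] by blast
  have "x = x \<otimes>\<^bsub>C n\<^esub> d n \<one>\<^bsub>C (Suc n)\<^esub>"
    using monoid.r_one[OF group.is_monoid[OF Cg] xc] d_one by simp
  then show "x \<in> Sup_cx C d D n" unfolding Sup_mem using x subgroup.one_closed[OF D] by blast
qed

lemma Inf_D: "Inf_cx C d D n \<subseteq> D n" by (cases n) (auto simp: Inf_0 Inf_Suc)

lemma Inf_mono: "(\<And>n. D' n \<subseteq> D n) \<Longrightarrow> Inf_cx C d D' n \<subseteq> Inf_cx C d D n"
  by (cases n) (auto simp: Inf_0 Inf_Suc)

lemma Sup_mono: assumes H: "\<And>n. D' n \<subseteq> D n" shows "Sup_cx C d D' n \<subseteq> Sup_cx C d D n"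
proof
  fix x assume "x \<in> Sup_cx C d D' n"
  then obtain a b where "a \<in> D' n" "b \<in> D' (Suc n)" "x = a \<otimes>\<^bsub>C n\<^esub> d n b" unfolding Sup_mem by blast
  then show "x \<in> Sup_cx C d D n" unfolding Sup_mem using H by blast
qed

lemma d_Inf:
  assumes D: "\<And>n. subgroup (D n) (C n)"
  shows "d n ` Inf_cx C d D (Suc n) \<subseteq> Inf_cx C d D n"
proof
  fix y assume "y \<in> d n ` Inf_cx C d D (Suc n)"
  then obtain x where x: "x \<in> D (Suc n)" "d n x \<in> D n" and y: "y = d n x" by (auto simp: Inf_Suc)
  show "y \<in> Inf_cx C d D n"
  proof (cases n)
    case 0 then show ?thesis using x y by (simp add: Inf_0)
  next
    case (Suc m)
    have "x \<in> carrier (C (Suc (Suc m)))" using x Suc subgroup.mem_carrier[OF D] by blast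
    then have "d m y = \<one>\<^bsub>C m\<^esub>" using y Suc dd by simp
    then show ?thesis using Suc x y subgroup.one_closed[OF D] by (simp add: Inf_Suc)
  qed
qed

lemma d_Sup:
  assumes D: "\<And>n. subgroup (D n) (C n)"
  shows "d n ` Sup_cx C d D (Suc n) \<subseteq> Sup_cx C d D n"
proof
  fix y assume "y \<in> d n ` Sup_cx C d D (Suc n)"
  then obtain x where x: "x \<in> Sup_cx C d D (Suc n)" and y: "y = d n x" by blast
  then obtain a b where a: "a \<in> D (Suc n)" and b: "b \<in> D (Suc (Suc n))"
    and xe: "x = a \<otimes>\<^bsub>C (Suc n)\<^esub> d (Suc n) b" unfolding Sup_mem by blast
  note y = y[unfolded xe]
  have ac: "a \<in> carrier (C (Suc n))" using a subgroup.mem_carrier[OF D] by blast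
  have bc: "b \<in> carrier (C (Suc (Suc n)))" using b subgroup.mem_carrier[OF D] by blast
  have "y = d n a \<otimes>\<^bsub>C n\<^esub> d n (d (Suc n) b)" using y d_mult[OF ac d_closed[OF bc]] by simp
  also have "\<dots> = d n a" using dd[OF bc] monoid.r_one[OF group.is_monoid[OF Cg] d_closed[OF ac]] by simp
  finally have "y = d n a" .
  moreover have "d n a = \<one>\<^bsub>C n\<^esub> \<otimes>\<^bsub>C n\<^esub> d n a"
    using monoid.l_one[OF group.is_monoid[OF Cg] d_closed[OF ac]] by simp
  ultimately show "y \<in> Sup_cx C d D n" unfolding Sup_mem using a subgroup.one_closed[OF D] by blast
qed

end


locale qcx = ccx +
  fixes A B :: "nat \<Rightarrow> 'a set"
  assumes A: "\<And>n. subgroup (A n) (C n)" and B: "\<And>n. subgroup (B n) (C n)"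
    and BA: "\<And>n. B n \<subseteq> A n"
    and dA: "\<And>n. d n ` A (Suc n) \<subseteq> A n" and dB: "\<And>n. d n ` B (Suc n) \<subseteq> B n"
begin

abbreviation "Q \<equiv> quot_cx C A B"
abbreviation "\<delta> \<equiv> quot_bd C d B"

lemma QB: "comm_group (Q n)"
    "carrier (Q n) = (\<lambda>z. B n #>\<^bsub>C n\<^esub> z) ` A n"
    "\<one>\<^bsub>Q n\<^esub> = B n"
    "\<And>x y. x \<in> A n \<Longrightarrow> y \<in> A n \<Longrightarrow> (B n #>\<^bsub>C n\<^esub> x) \<otimes>\<^bsub>Q n\<^esub> (B n #>\<^bsub>C n\<^esub> y) = B n #>\<^bsub>C n\<^esub> (x \<otimes>\<^bsub>C n\<^esub> y)"
  unfolding quot_cx_def using quot_basic[OF CG A B BA] by auto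

lemma Qg: "group (Q n)" using QB(1) comm_group.axioms(2) by blast

lemma Ac: "a \<in> A n \<Longrightarrow> a \<in> carrier (C n)" using subgroup.mem_carrier[OF A] .

lemma \<delta>_eq: "\<delta> n = (\<lambda>S. B n <#>\<^bsub>C n\<^esub> d n ` S)" by (simp add: quot_bd_def fun_eq_iff)

lemma \<delta>_hom: "\<delta> n \<in> hom (Q (Suc n)) (Q n)"
  unfolding \<delta>_eq quot_cx_def by (rule quot_hom_iso(1)[OF CG CG A B BA A B BA dhom dA dB])

lemma \<delta>_gh: "group_hom (Q (Suc n)) (Q n) (\<delta> n)"
  by (simp add: group_hom_def group_hom_axioms_def Qg \<delta>_hom)

lemma \<delta>_coset: "a \<in> carrier (C (Suc n)) \<Longrightarrow> \<delta> n (B (Suc n) #>\<^bsub>C (Suc n)\<^esub> a) = B n #>\<^bsub>C n\<^esub> d n a"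
  unfolding \<delta>_eq using img_coset[OF Cg Cg B B dhom dB] by simp

lemma Q_obtain:
  assumes "U \<in> carrier (Q n)" obtains a where "a \<in> A n" "U = B n #>\<^bsub>C n\<^esub> a"
  using assms unfolding QB(2) by blast

lemma Q_mem: "a \<in> A n \<Longrightarrow> B n #>\<^bsub>C n\<^esub> a \<in> carrier (Q n)"
  unfolding QB(2) by blast

lemma coset_one_iff: "a \<in> carrier (C n) \<Longrightarrow> (B n #>\<^bsub>C n\<^esub> a = B n) \<longleftrightarrow> a \<in> B n"
  by (metis B Cg group.coset_join1 subgroup.rcos_const)

lemma cycles_0: "cycles Q \<delta> 0 = carrier (Q 0)" by (simp add: cycles_def)
lemma cycles_Suc: "cycles Q \<delta> (Suc n) = {U \<in> carrier (Q (Suc n)). \<delta> n U = B n}"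
  by (simp add: cycles_def kernel_def QB(3))

lemma cycle_coset_Suc: "a \<in> A (Suc n) \<Longrightarrow> (B (Suc n) #>\<^bsub>C (Suc n)\<^esub> a \<in> cycles Q \<delta> (Suc n)) \<longleftrightarrow> d n a \<in> B n"
  using cycles_Suc \<delta>_coset Q_mem coset_one_iff d_closed Ac by simp

lemma cycles_sub: "subgroup (cycles Q \<delta> n) (Q n)"
proof (cases n)
  case 0 then show ?thesis by (simp add: cycles_0 group.subgroup_self[OF Qg])
next
  case (Suc m) then show ?thesis
    using group_hom.subgroup_kernel[OF \<delta>_gh[of m]] by (simp add: cycles_def)
qed

lemma bd_sub: "subgroup (boundaries Q \<delta> n) (Q n)"
  unfolding boundaries_def using group_hom.img_is_subgroup[OF \<delta>_gh] .

lemma bd_mem: "U \<in> boundaries Q \<delta> n \<longleftrightarrow> (\<exists>a\<in>A (Suc n). U = B n #>\<^bsub>C n\<^esub> d n a)"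
proof
  assume "U \<in> boundaries Q \<delta> n"
  then obtain V where V: "V \<in> carrier (Q (Suc n))" and U: "U = \<delta> n V" by (auto simp: boundaries_def)
  obtain a where "a \<in> A (Suc n)" "V = B (Suc n) #>\<^bsub>C (Suc n)\<^esub> a" using Q_obtain[OF V] .
  then show "\<exists>a\<in>A (Suc n). U = B n #>\<^bsub>C n\<^esub> d n a" using U \<delta>_coset Ac by auto
next
  assume "\<exists>a\<in>A (Suc n). U = B n #>\<^bsub>C n\<^esub> d n a"
  then obtain a where a: "a \<in> A (Suc n)" and U: "U = B n #>\<^bsub>C n\<^esub> d n a" by blast
  then have "U = \<delta> n (B (Suc n) #>\<^bsub>C (Suc n)\<^esub> a)" using \<delta>_coset Ac by simp
  then show "U \<in> boundaries Q \<delta> n" using Q_mem[OF a] by (auto simp: boundaries_def)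
qed

lemma bd_cyc: "boundaries Q \<delta> n \<subseteq> cycles Q \<delta> n"
proof
  fix U assume "U \<in> boundaries Q \<delta> n"
  then obtain a where a: "a \<in> A (Suc n)" and U: "U = B n #>\<^bsub>C n\<^esub> d n a" using bd_mem by blast
  have da: "d n a \<in> A n" using dA a by blast
  show "U \<in> cycles Q \<delta> n"
  proof (cases n)
    case 0 then show ?thesis using U Q_mem[OF da] by (simp add: cycles_0)
  next
    case (Suc m)
    have "a \<in> carrier (C (Suc (Suc m)))" using a Suc Ac by simp
    then have "d m (d n a) = \<one>\<^bsub>C m\<^esub>" using dd Suc by simp
    then have "d m (d n a) \<in> B m" using subgroup.one_closed[OF B] by simp
    then show ?thesis using cycle_coset_Suc[of "d n a" m] da U Suc by simp
  qed
qed

lemma homology_eq: "homology Q \<delta> n = subgroup_generated (Q n) (cycles Q \<delta> n) Mod boundaries Q \<delta> n"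
  by (simp add: homology_def)

end


lemma coset_eq_iff2:
  assumes "group G" "subgroup B G" "x \<in> carrier G" "y \<in> carrier G"
  shows "(B #>\<^bsub>G\<^esub> x = B #>\<^bsub>G\<^esub> y) \<longleftrightarrow> (\<exists>u\<in>B. x = u \<otimes>\<^bsub>G\<^esub> y)"
proof
  assume "B #>\<^bsub>G\<^esub> x = B #>\<^bsub>G\<^esub> y"
  moreover have "x \<in> B #>\<^bsub>G\<^esub> x" using assms group.rcos_self by metis
  ultimately show "\<exists>u\<in>B. x = u \<otimes>\<^bsub>G\<^esub> y" unfolding r_coset_def by blast
next
  assume "\<exists>u\<in>B. x = u \<otimes>\<^bsub>G\<^esub> y"
  then have "x \<in> B #>\<^bsub>G\<^esub> y" unfolding r_coset_def by blast
  then show "B #>\<^bsub>G\<^esub> x = B #>\<^bsub>G\<^esub> y" using assms group.repr_independence by metis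
qed

theorem lemma1p1:
  fixes C :: "nat \<Rightarrow> ('a, 'm) monoid_scheme" and d :: "nat \<Rightarrow> 'a \<Rightarrow> 'a"
    and D D' :: "nat \<Rightarrow> 'a set"
  assumes "chain_complex C d"
    and "\<And>n. subgroup (D n) (C n)"
    and "\<And>n. subgroup (D' n) (C n)"
    and "\<And>n. D' n \<subseteq> D n"
  defines "\<iota> \<equiv> (\<lambda>n S. Sup_cx C d D' n <#>\<^bsub>C n\<^esub> S)"
  shows "chain_map (quot_cx C (Inf_cx C d D) (Inf_cx C d D')) (quot_bd C d (Inf_cx C d D'))
                   (quot_cx C (Sup_cx C d D) (Sup_cx C d D')) (quot_bd C d (Sup_cx C d D')) \<iota>
         \<and> (\<forall>n. hom_induced (quot_cx C (Sup_cx C d D) (Sup_cx C d D')) (quot_bd C d (Sup_cx C d D')) \<iota> n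
                 \<in> iso (homology (quot_cx C (Inf_cx C d D) (Inf_cx C d D')) (quot_bd C d (Inf_cx C d D')) n)
                       (homology (quot_cx C (Sup_cx C d D) (Sup_cx C d D')) (quot_bd C d (Sup_cx C d D')) n))"
proof -
  note cc = assms(1) and sD = assms(2) and sD' = assms(3) and DD = assms(4)
  interpret ccx C d by unfold_locales (rule cc)
  interpret I: qcx C d "Inf_cx C d D" "Inf_cx C d D'"
    by (intro qcx.intro qcx_axioms.intro ccx.intro cc Inf_subgroup sD sD' Inf_mono DD d_Inf)
  interpret S: qcx C d "Sup_cx C d D" "Sup_cx C d D'"
    by (intro qcx.intro qcx_axioms.intro ccx.intro cc Sup_subgroup sD sD' Sup_mono DD d_Sup)
  have \<iota>eq: "\<iota> n = (\<lambda>S. Sup_cx C d D' n <#>\<^bsub>C n\<^esub> (\<lambda>x. x) ` S)" for n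
    by (simp add: \<iota>_def)
  have idhom: "(\<lambda>x. x) \<in> hom (C n) (C n)" for n by (rule homI) auto
  have IS: "Inf_cx C d D n \<subseteq> Sup_cx C d D n" for n using Inf_D D_Sup[OF sD] by blast
  have IS': "Inf_cx C d D' n \<subseteq> Sup_cx C d D' n" for n using Inf_D D_Sup[OF sD'] by blast
  have \<iota>_hom: "\<iota> n \<in> hom (quot_cx C (Inf_cx C d D) (Inf_cx C d D') n) (quot_cx C (Sup_cx C d D) (Sup_cx C d D') n)" for n
    unfolding \<iota>eq quot_cx_def
    by (rule quot_hom_iso(1)[OF CG CG I.A I.B I.BA S.A S.B S.BA idhom]) (use IS IS' in auto)
  have \<iota>_coset: "\<iota> n (Inf_cx C d D' n #>\<^bsub>C n\<^esub> a) = Sup_cx C d D' n #>\<^bsub>C n\<^esub> a" if "a \<in> carrier (C n)" for n a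
    unfolding \<iota>eq using img_coset[OF Cg Cg I.B S.B idhom _ that] IS' by auto
  have CM: "chain_map (quot_cx C (Inf_cx C d D) (Inf_cx C d D')) (quot_bd C d (Inf_cx C d D'))
                   (quot_cx C (Sup_cx C d D) (Sup_cx C d D')) (quot_bd C d (Sup_cx C d D')) \<iota>"
    unfolding chain_map_def
  proof (intro conjI allI impI \<iota>_hom)
    fix n x assume "x \<in> carrier (quot_cx C (Inf_cx C d D) (Inf_cx C d D') (Suc n))"
    then obtain a where a: "a \<in> Inf_cx C d D (Suc n)" and x: "x = Inf_cx C d D' (Suc n) #>\<^bsub>C (Suc n)\<^esub> a"
      by (rule I.Q_obtain)
    have ac: "a \<in> carrier (C (Suc n))" using I.Ac[OF a] .
    show "\<iota> n (quot_bd C d (Inf_cx C d D') n x) = quot_bd C d (Sup_cx C d D') n (\<iota> (Suc n) x)"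
      unfolding x I.\<delta>_coset[OF ac] \<iota>_coset[OF ac] \<iota>_coset[OF d_closed[OF ac]] S.\<delta>_coset[OF ac] ..
  qed
  have fZ: "\<iota> n ` cycles I.Q I.\<delta> n \<subseteq> cycles S.Q S.\<delta> n" for n
  proof
    fix V assume "V \<in> \<iota> n ` cycles I.Q I.\<delta> n"
    then obtain U where U: "U \<in> cycles I.Q I.\<delta> n" and V: "V = \<iota> n U" by blast
    have "U \<in> carrier (I.Q n)" using U subgroup.subset[OF I.cycles_sub] by blast
    then obtain a where a: "a \<in> Inf_cx C d D n" and Ue: "U = Inf_cx C d D' n #>\<^bsub>C n\<^esub> a" by (rule I.Q_obtain)
    have ac: "a \<in> carrier (C n)" using I.Ac[OF a] .
    have V2: "V = Sup_cx C d D' n #>\<^bsub>C n\<^esub> a" using V Ue \<iota>_coset[OF ac] by simp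
    have aS: "a \<in> Sup_cx C d D n" using IS a by blast
    show "V \<in> cycles S.Q S.\<delta> n"
    proof (cases n)
      case 0 then show ?thesis using S.cycles_0 S.Q_mem[OF aS] V2 by simp
    next
      case (Suc m)
      have a1: "a \<in> Inf_cx C d D (Suc m)" using a Suc by simp
      have "d m a \<in> Inf_cx C d D' m" using I.cycle_coset_Suc[OF a1] U Ue Suc by simp
      then have "d m a \<in> Sup_cx C d D' m" using IS' by blast
      then show ?thesis using S.cycle_coset_Suc[of a m] aS Suc V2 by simp
    qed
  qed
  have fB: "\<iota> n ` boundaries I.Q I.\<delta> n \<subseteq> boundaries S.Q S.\<delta> n" for n
  proof
    fix V assume "V \<in> \<iota> n ` boundaries I.Q I.\<delta> n"
    then obtain U where U: "U \<in> boundaries I.Q I.\<delta> n" and V: "V = \<iota> n U" by blast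
    then obtain a where a: "a \<in> Inf_cx C d D (Suc n)" and Ue: "U = Inf_cx C d D' n #>\<^bsub>C n\<^esub> d n a"
      using I.bd_mem by blast
    have ac: "a \<in> carrier (C (Suc n))" using I.Ac[OF a] .
    have V2: "V = Sup_cx C d D' n #>\<^bsub>C n\<^esub> d n a" using V Ue \<iota>_coset[OF d_closed[OF ac]] by simp
    have aS: "a \<in> Sup_cx C d D (Suc n)" using IS a by blast
    show "V \<in> boundaries S.Q S.\<delta> n" using S.bd_mem aS V2 by blast
  qed
  have ISO: "hom_induced S.Q S.\<delta> \<iota> n \<in> iso (homology I.Q I.\<delta> n) (homology S.Q S.\<delta> n)" for n
  proof -
    have heq: "hom_induced S.Q S.\<delta> \<iota> n = (\<lambda>U. boundaries S.Q S.\<delta> n <#>\<^bsub>S.Q n\<^esub> \<iota> n ` U)"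
      by (simp add: hom_induced_def fun_eq_iff)
    show ?thesis unfolding heq homology_def
    proof (rule quot_hom_iso(2)[OF I.QB(1) S.QB(1) I.cycles_sub I.bd_sub I.bd_cyc S.cycles_sub S.bd_sub S.bd_cyc
            \<iota>_hom fZ fB])
      show "\<And>U. U \<in> cycles I.Q I.\<delta> n \<Longrightarrow> \<iota> n U \<in> boundaries S.Q S.\<delta> n \<Longrightarrow> U \<in> boundaries I.Q I.\<delta> n"
      proof -
        fix U assume U: "U \<in> cycles I.Q I.\<delta> n" and iU: "\<iota> n U \<in> boundaries S.Q S.\<delta> n"
        interpret Cn: comm_group "C n" by (rule CG)
        have "U \<in> carrier (I.Q n)" using U subgroup.subset[OF I.cycles_sub] by blast
        then obtain a where a: "a \<in> Inf_cx C d D n" and Ue: "U = Inf_cx C d D' n #>\<^bsub>C n\<^esub> a" by (rule I.Q_obtain)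
        have ac: "a \<in> carrier (C n)" using I.Ac[OF a] .
        have "\<iota> n U = Sup_cx C d D' n #>\<^bsub>C n\<^esub> a" using Ue \<iota>_coset[OF ac] by simp
        then obtain b where b: "b \<in> Sup_cx C d D (Suc n)" and be: "Sup_cx C d D' n #>\<^bsub>C n\<^esub> a = Sup_cx C d D' n #>\<^bsub>C n\<^esub> d n b"
          using iU S.bd_mem by auto
        have bc: "b \<in> carrier (C (Suc n))" using S.Ac[OF b] .
        obtain s where s: "s \<in> Sup_cx C d D' n" and ase: "a = s \<otimes>\<^bsub>C n\<^esub> d n b"
          using be coset_eq_iff2[OF Cg S.B ac d_closed[OF bc]] by blast
        obtain x y where x: "x \<in> D (Suc n)" and y: "y \<in> D (Suc (Suc n))" and bxy: "b = x \<otimes>\<^bsub>C (Suc n)\<^esub> d (Suc n) y"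
          using b Sup_mem by blast
        obtain u v where u: "u \<in> D' n" and v: "v \<in> D' (Suc n)" and suv: "s = u \<otimes>\<^bsub>C n\<^esub> d n v"
          using s Sup_mem by blast
        have xc: "x \<in> carrier (C (Suc n))" using x subgroup.mem_carrier[OF sD] by blast
        have yc: "y \<in> carrier (C (Suc (Suc n)))" using y subgroup.mem_carrier[OF sD] by blast
        have uc: "u \<in> carrier (C n)" using u subgroup.mem_carrier[OF sD'] by blast
        have vc: "v \<in> carrier (C (Suc n))" using v subgroup.mem_carrier[OF sD'] by blast
        have dbx: "d n b = d n x"
          using bxy d_mult[OF xc d_closed[OF yc]] dd[OF yc] Cn.r_one[OF d_closed[OF xc]] by simp
        define w where "w = v \<otimes>\<^bsub>C (Suc n)\<^esub> x"
        have wc: "w \<in> carrier (C (Suc n))" unfolding w_def by (rule monoid.m_closed[OF group.is_monoid[OF Cg] vc xc])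
        have dw: "d n w = d n v \<otimes>\<^bsub>C n\<^esub> d n x" unfolding w_def using d_mult[OF vc xc] .
        have aw: "a = u \<otimes>\<^bsub>C n\<^esub> d n w"
          unfolding ase suv dbx dw using Cn.m_assoc[OF uc d_closed[OF vc] d_closed[OF xc]] by simp
        have dwu: "d n w = inv\<^bsub>C n\<^esub> u \<otimes>\<^bsub>C n\<^esub> a"
          using aw Cn.inv_solve_left[OF d_closed[OF wc] uc ac] by simp
        have wD: "w \<in> D (Suc n)" unfolding w_def using subgroup.m_closed[OF sD] v x DD by blast
        have aD: "a \<in> D n" using a Inf_D by blast
        have dwD: "d n w \<in> D n" unfolding dwu using subgroup.m_closed[OF sD subgroup.m_inv_closed[OF sD] aD] u DD by blast
        have wI: "w \<in> Inf_cx C d D (Suc n)" using wD dwD by (simp add: Inf_Suc)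
        have uI: "u \<in> Inf_cx C d D' n"
        proof (cases n)
          case 0 then show ?thesis using u by (simp add: Inf_0)
        next
          case (Suc m)
          have a1: "a \<in> Inf_cx C d D (Suc m)" using a Suc by simp
          have "d m a \<in> Inf_cx C d D' m" using I.cycle_coset_Suc[OF a1] U Ue Suc by simp
          then have dma: "d m a \<in> D' m" using Inf_D by blast
          have wc2: "w \<in> carrier (C (Suc (Suc m)))" using wc Suc by simp
          have uc2: "u \<in> carrier (C (Suc m))" using uc Suc by simp
          have "d m a = d m u \<otimes>\<^bsub>C m\<^esub> d m (d (Suc m) w)"
            using aw Suc d_mult[OF uc2 d_closed[OF wc2]] by simp
          also have "\<dots> = d m u" using dd[OF wc2] monoid.r_one[OF group.is_monoid[OF Cg] d_closed[OF uc2]] by simp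
          finally show ?thesis using dma u Suc by (simp add: Inf_Suc)
        qed
        have "U = Inf_cx C d D' n #>\<^bsub>C n\<^esub> d n w"
          unfolding Ue using coset_eq_iff2[OF Cg I.B ac d_closed[OF wc]] uI aw by blast
        then show "U \<in> boundaries I.Q I.\<delta> n" using I.bd_mem wI by blast
      qed
      show "\<And>V. V \<in> cycles S.Q S.\<delta> n \<Longrightarrow> \<exists>U\<in>cycles I.Q I.\<delta> n. \<exists>b'\<in>boundaries S.Q S.\<delta> n. V = b' \<otimes>\<^bsub>S.Q n\<^esub> \<iota> n U"
      proof -
        fix V assume V: "V \<in> cycles S.Q S.\<delta> n"
        interpret Cn: comm_group "C n" by (rule CG)
        have "V \<in> carrier (S.Q n)" using V subgroup.subset[OF S.cycles_sub] by blast
        then obtain s where s: "s \<in> Sup_cx C d D n" and Ve: "V = Sup_cx C d D' n #>\<^bsub>C n\<^esub> s" by (rule S.Q_obtain)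
        obtain x y where x: "x \<in> D n" and y: "y \<in> D (Suc n)" and sxy: "s = x \<otimes>\<^bsub>C n\<^esub> d n y"
          using s Sup_mem by blast
        have xc: "x \<in> carrier (C n)" using x subgroup.mem_carrier[OF sD] by blast
        have yc: "y \<in> carrier (C (Suc n))" using y subgroup.mem_carrier[OF sD] by blast
        have "\<exists>v\<in>D' n. x \<otimes>\<^bsub>C n\<^esub> inv\<^bsub>C n\<^esub> v \<in> Inf_cx C d D n \<and>
                Inf_cx C d D' n #>\<^bsub>C n\<^esub> (x \<otimes>\<^bsub>C n\<^esub> inv\<^bsub>C n\<^esub> v) \<in> cycles I.Q I.\<delta> n"
        proof (cases n)
          case 0
          have "x \<otimes>\<^bsub>C n\<^esub> inv\<^bsub>C n\<^esub> \<one>\<^bsub>C n\<^esub> = x" using xc by simp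
          moreover have "x \<in> Inf_cx C d D n" using x 0 by (simp add: Inf_0)
          ultimately show ?thesis using subgroup.one_closed[OF sD'] I.Q_mem 0 I.cycles_0 by metis
        next
          case (Suc m)
          have s1: "s \<in> Sup_cx C d D (Suc m)" using s Suc by simp
          have "d m s \<in> Sup_cx C d D' m" using S.cycle_coset_Suc[OF s1] V Ve Suc by simp
          moreover have "d m s = d m x"
          proof -
            have xc1: "x \<in> carrier (C (Suc m))" using xc Suc by simp
            have yc1: "y \<in> carrier (C (Suc (Suc m)))" using yc Suc by simp
            have "d m s = d m x \<otimes>\<^bsub>C m\<^esub> d m (d (Suc m) y)" using sxy Suc d_mult[OF xc1 d_closed[OF yc1]] by simp
            also have "\<dots> = d m x" using dd[OF yc1] monoid.r_one[OF group.is_monoid[OF Cg] d_closed[OF xc1]] by simp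
            finally show ?thesis .
          qed
          ultimately obtain u v where u: "u \<in> D' m" and v: "v \<in> D' (Suc m)" and xuv: "d m x = u \<otimes>\<^bsub>C m\<^esub> d m v"
            using Sup_mem by auto
          have xc1: "x \<in> carrier (C (Suc m))" using xc Suc by simp
          have vc1: "v \<in> carrier (C (Suc m))" using v subgroup.mem_carrier[OF sD'] by blast
          have uc: "u \<in> carrier (C m)" using u subgroup.mem_carrier[OF sD'] by blast
          define t where "t = x \<otimes>\<^bsub>C (Suc m)\<^esub> inv\<^bsub>C (Suc m)\<^esub> v"
          have tc: "t \<in> carrier (C (Suc m))" unfolding t_def
            by (rule monoid.m_closed[OF group.is_monoid[OF Cg] xc1 group.inv_closed[OF Cg vc1]])
          have dt: "d m t = u"
          proof -
            have "d m t = d m x \<otimes>\<^bsub>C m\<^esub> inv\<^bsub>C m\<^esub> d m v"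
              unfolding t_def using d_mult[OF xc1 group.inv_closed[OF Cg vc1]] d_inv[OF vc1] by simp
            then show ?thesis using xuv group.inv_solve_right'[OF Cg uc d_closed[OF xc1] d_closed[OF vc1]] by simp
          qed
          have tD: "t \<in> D (Suc m)" unfolding t_def
            using subgroup.m_closed[OF sD _ subgroup.m_inv_closed[OF sD]] x v DD Suc by blast
          have tI: "t \<in> Inf_cx C d D (Suc m)" using tD dt u DD by (auto simp: Inf_Suc)
          have uI: "u \<in> Inf_cx C d D' m"
          proof (cases m)
            case 0 then show ?thesis using u by (simp add: Inf_0)
          next
            case (Suc k)
            have tc2: "t \<in> carrier (C (Suc (Suc k)))" using tc Suc by simp
            have "d k u = \<one>\<^bsub>C k\<^esub>" using dd[OF tc2] dt Suc by simp
            then show ?thesis using u Suc subgroup.one_closed[OF sD'] by (simp add: Inf_Suc)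
          qed
          have cyc: "Inf_cx C d D' (Suc m) #>\<^bsub>C (Suc m)\<^esub> t \<in> cycles I.Q I.\<delta> (Suc m)"
            using I.cycle_coset_Suc[OF tI] dt uI by simp
          show ?thesis using tI cyc v Suc unfolding t_def by auto
        qed
        then obtain v where v: "v \<in> D' n" and tI: "x \<otimes>\<^bsub>C n\<^esub> inv\<^bsub>C n\<^esub> v \<in> Inf_cx C d D n"
          and cyc: "Inf_cx C d D' n #>\<^bsub>C n\<^esub> (x \<otimes>\<^bsub>C n\<^esub> inv\<^bsub>C n\<^esub> v) \<in> cycles I.Q I.\<delta> n" by blast
        define t where "t = x \<otimes>\<^bsub>C n\<^esub> inv\<^bsub>C n\<^esub> v"
        have vc: "v \<in> carrier (C n)" using v subgroup.mem_carrier[OF sD'] by blast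
        have tc: "t \<in> carrier (C n)" unfolding t_def using xc vc by simp
        have dyc: "d n y \<in> carrier (C n)" using d_closed[OF yc] .
        have yS: "y \<in> Sup_cx C d D (Suc n)" using y D_Sup[OF sD] by blast
        have dyS: "d n y \<in> Sup_cx C d D n" using d_Sup[OF sD] yS by blast
        have tS: "t \<in> Sup_cx C d D n" using tI IS unfolding t_def by blast
        have bd: "Sup_cx C d D' n #>\<^bsub>C n\<^esub> d n y \<in> boundaries S.Q S.\<delta> n" using S.bd_mem yS by blast
        have prod: "(Sup_cx C d D' n #>\<^bsub>C n\<^esub> d n y) \<otimes>\<^bsub>S.Q n\<^esub> \<iota> n (Inf_cx C d D' n #>\<^bsub>C n\<^esub> t)
              = Sup_cx C d D' n #>\<^bsub>C n\<^esub> (d n y \<otimes>\<^bsub>C n\<^esub> t)"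
          using \<iota>_coset[OF tc] S.QB(4)[OF dyS tS] by simp
        have alg: "s = v \<otimes>\<^bsub>C n\<^esub> (d n y \<otimes>\<^bsub>C n\<^esub> t)"
        proof -
          have "d n y \<otimes>\<^bsub>C n\<^esub> t = (d n y \<otimes>\<^bsub>C n\<^esub> x) \<otimes>\<^bsub>C n\<^esub> inv\<^bsub>C n\<^esub> v"
            unfolding t_def using Cn.m_assoc[OF dyc xc Cn.inv_closed[OF vc]] by simp
          then have "d n y \<otimes>\<^bsub>C n\<^esub> x = (d n y \<otimes>\<^bsub>C n\<^esub> t) \<otimes>\<^bsub>C n\<^esub> v"
            using Cn.inv_solve_right'[OF Cn.m_closed[OF dyc tc] Cn.m_closed[OF dyc xc] vc] by simp
          then show ?thesis using sxy Cn.m_comm[OF xc dyc] Cn.m_comm[OF vc Cn.m_closed[OF dyc tc]] by simp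
        qed
        have "V = Sup_cx C d D' n #>\<^bsub>C n\<^esub> (d n y \<otimes>\<^bsub>C n\<^esub> t)"
          unfolding Ve using coset_eq_iff2[OF Cg S.B S.Ac[OF s] Cn.m_closed[OF dyc tc]] alg v D_Sup[OF sD'] by blast
        then show "\<exists>U\<in>cycles I.Q I.\<delta> n. \<exists>b'\<in>boundaries S.Q S.\<delta> n. V = b' \<otimes>\<^bsub>S.Q n\<^esub> \<iota> n U"
          using prod bd cyc unfolding t_def by metis
      qed
    qed
  qed
  show ?thesis using CM ISO by blast
qed

end
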